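(* There is a surjective morphism of operads $\mathrm{FMan}\twoheadrightarrow \mathrm{gr}_F\,\mathrm{PreLie}$ sending $-\circ-$ and $[-,-]$ to the cosets of the symmetrised pre-Lie product and of the pre-Lie bracket, respectively.
   Context: All operads are symmetric, reduced and connected, over a field $\mathbb{k}$ of characteristic zero. The operad $\mathrm{PreLie}$ is generated by one binary operation $a_1\cdot a_2$ with no symmetry, subject to $(a_1\cdot a_2)\cdot a_3 - a_1\cdot (a_2\cdot a_3) = (a_1\cdot a_3)\cdot a_2- a_1\cdot (a_3\cdot a_2)$. Put $a_1\circ a_2=a_1\cdot a_2+a_2\cdot a_1$ and $[a_1,a_2]=a_1\cdot a_2-a_2\cdot a_1$. The Lie filtration $F^\bullet\mathrm{PreLie}$ is the filtration by powers of the operadic ideal generated by $[-,-]$ (so $F^k\mathrm{PreLie}$ is spanned by tree composites of $\circ$ and $[-,-]$ with at least $k$ vertices labelled by $[-,-]$), and $\mathrm{gr}_F\mathrm{PreLie}$ is the associated graded operad. The operad $\mathrm{FMan}$ is generated by a symmetric binary operation $-\circ-$ and a skew-symmetric binary operation $[-,-]$ subject to associativity of $\circ$, the Jacobi identity for $[-,-]$, and the Hertling--Manin relation \begin{multline*} [a_1\circ a_2,a_3\circ a_4]= [a_1\circ a_2, a_3]\circ a_4+[a_1\circ a_2, a_4]\circ a_3+a_1\circ [a_2, a_3\circ a_4]+a_2\circ [a_1, a_3\circ a_4]-\\ (a_1\circ a_3)\circ[a_2,a_4]-(a_2\circ a_3)\circ[a_1,a_4]-(a_2\circ a_4)\circ[a_1,a_3]-(a_1\circ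 a_4)\circ[a_2,a_3] . \end{multline*} *)

theory Defs
  imports Main "HOL-Library.Function_Algebras"
begin

text \<open>Binary trees with labelled leaves are the nonassociative
monomials in the variables x_1, x_2, ...; a node Node a b is the product a.b.
Elements of the free magma algebra over the field 'k are finitely supported
functions tree => 'k (all elements we construct are finitely supported).\<close>

datatype tree = Leaf nat | Node tree tree

definition mono :: "tree \<Rightarrow> tree \<Rightarrow> 'k::field" where
  "mono t = (\<lambda>s. if s = t then 1 else 0)"

definition scl :: "'k::field \<Rightarrow> (tree \<Rightarrow> 'k) \<Rightarrow> tree \<Rightarrow> 'k" where
  "scl c f = (\<lambda>t. c * f t)"

definition mult :: "(tree \<Rightarrow> 'k::field) \<Rightarrow> (tree \<Rightarrow> 'k) \<Rightarrow> tree \<Rightarrow> 'k" where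
  "mult f g = (\<lambda>t. case t of Leaf _ \<Rightarrow> 0 | Node a b \<Rightarrow> f a * g b)"

definition lspan :: "(tree \<Rightarrow> 'k::field) set \<Rightarrow> (tree \<Rightarrow> 'k) set" where
  "lspan S = {x. \<exists>F c. finite F \<and> F \<subseteq> S \<and> x = (\<Sum>v\<in>F. scl (c v) v)}"

definition circ :: "(tree \<Rightarrow> 'k::field) \<Rightarrow> (tree \<Rightarrow> 'k) \<Rightarrow> tree \<Rightarrow> 'k" where
  "circ f g = mult f g + mult g f"

definition br :: "(tree \<Rightarrow> 'k::field) \<Rightarrow> (tree \<Rightarrow> 'k) \<Rightarrow> tree \<Rightarrow> 'k" where
  "br f g = mult f g - mult g f"

text \<open>The free pre-Lie algebra is the free magma algebra modulo lspan PLI.\<close>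
inductive_set PLI :: "(tree \<Rightarrow> 'k::field) set" where
  gen: "mult (mult (mono u) (mono v)) (mono w) - mult (mono u) (mult (mono v) (mono w))
        - (mult (mult (mono u) (mono w)) (mono v) - mult (mono u) (mult (mono w) (mono v))) \<in> PLI"
| left: "x \<in> PLI \<Longrightarrow> mult (mono t) x \<in> PLI"
| right: "x \<in> PLI \<Longrightarrow> mult x (mono t) \<in> PLI"

text \<open>Tree composites of circ and the bracket (elements of the free operad on a symmetric
and a skew-symmetric generator), with number of bracket vertices and evaluation.\<close>
datatype ctree = CVar nat | CCirc ctree ctree | CBr ctree ctree

fun nbr :: "ctree \<Rightarrow> nat" where
  "nbr (CVar _) = 0"
| "nbr (CCirc a b) = nbr a + nbr b"
| "nbr (CBr a b) = Suc (nbr a + nbr b)"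

fun ev :: "ctree \<Rightarrow> tree \<Rightarrow> 'k::field" where
  "ev (CVar i) = mono (Leaf i)"
| "ev (CCirc a b) = circ (ev a) (ev b)"
| "ev (CBr a b) = br (ev a) (ev b)"

text \<open>Lie filtration F^k PreLie (lifted to the free magma algebra): spanned by tree
composites with at least k bracket vertices, modulo the pre-Lie identities.\<close>
definition Filt :: "nat \<Rightarrow> (tree \<Rightarrow> 'k::field) set" where
  "Filt k = lspan (PLI \<union> {ev T | T. k \<le> nbr T})"

text \<open>Defining relations of FMan.\<close>
definition rel_csym :: "(tree \<Rightarrow> 'k::field) \<Rightarrow> (tree \<Rightarrow> 'k) \<Rightarrow> tree \<Rightarrow> 'k" where
  "rel_csym a b = circ a b - circ b a"

definition rel_bskew :: "(tree \<Rightarrow> 'k::field) \<Rightarrow> (tree \<Rightarrow> 'k) \<Rightarrow> tree \<Rightarrow> 'k" where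
  "rel_bskew a b = br a b + br b a"

definition rel_assoc :: "(tree \<Rightarrow> 'k::field) \<Rightarrow> (tree \<Rightarrow> 'k) \<Rightarrow> (tree \<Rightarrow> 'k) \<Rightarrow> tree \<Rightarrow> 'k" where
  "rel_assoc a b c = circ (circ a b) c - circ a (circ b c)"

definition rel_jacobi :: "(tree \<Rightarrow> 'k::field) \<Rightarrow> (tree \<Rightarrow> 'k) \<Rightarrow> (tree \<Rightarrow> 'k) \<Rightarrow> tree \<Rightarrow> 'k" where
  "rel_jacobi a b c = br (br a b) c + br (br b c) a + br (br c a) b"

definition rel_hm :: "(tree \<Rightarrow> 'k::field) \<Rightarrow> (tree \<Rightarrow> 'k) \<Rightarrow> (tree \<Rightarrow> 'k) \<Rightarrow> (tree \<Rightarrow> 'k) \<Rightarrow> tree \<Rightarrow> 'k" where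
  "rel_hm a1 a2 a3 a4 =
     br (circ a1 a2) (circ a3 a4)
     - (circ (br (circ a1 a2) a3) a4 + circ (br (circ a1 a2) a4) a3
        + circ a1 (br a2 (circ a3 a4)) + circ a2 (br a1 (circ a3 a4))
        - circ (circ a1 a3) (br a2 a4) - circ (circ a2 a3) (br a1 a4)
        - circ (circ a2 a4) (br a1 a3) - circ (circ a1 a4) (br a2 a3))"

text \<open>Image, under the canonical map from the free operad (circ/bracket trees evaluated
in PreLie), of the operadic ideal of FMan relations, as weight-homogeneous generators:
(w, x) means x is a weight-w element (w = number of bracket vertices).\<close>
inductive_set FMI :: "(nat \<times> (tree \<Rightarrow> 'k::field)) set" where
  csym: "(nbr A + nbr B, rel_csym (ev A) (ev B)) \<in> FMI"
| bskew: "(Suc (nbr A + nbr B), rel_bskew (ev A) (ev B)) \<in> FMI"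
| assoc: "(nbr A + nbr B + nbr C, rel_assoc (ev A) (ev B) (ev C)) \<in> FMI"
| jacobi: "(2 + nbr A + nbr B + nbr C, rel_jacobi (ev A) (ev B) (ev C)) \<in> FMI"
| hm: "(1 + nbr A + nbr B + nbr C + nbr D, rel_hm (ev A) (ev B) (ev C) (ev D)) \<in> FMI"
| circ_l: "(w, x) \<in> FMI \<Longrightarrow> (w + nbr T, circ x (ev T)) \<in> FMI"
| circ_r: "(w, x) \<in> FMI \<Longrightarrow> (w + nbr T, circ (ev T) x) \<in> FMI"
| br_l: "(w, x) \<in> FMI \<Longrightarrow> (Suc (w + nbr T), br x (ev T)) \<in> FMI"
| br_r: "(w, x) \<in> FMI \<Longrightarrow> (Suc (w + nbr T), br (ev T) x) \<in> FMI"

text \<open>The map from the free operad to gr_F PreLie sending a tree T to the class of ev T in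
F^(nbr T)/F^(nbr T + 1) descends to FMan iff every weight-w ideal generator lies in F^(w+1).\<close>
definition descends_to_FMan :: "'k::field itself \<Rightarrow> bool" where
  "descends_to_FMan _ \<longleftrightarrow> (\<forall>(w, x) \<in> (FMI :: (nat \<times> (tree \<Rightarrow> 'k)) set). x \<in> Filt (Suc w))"

text \<open>The induced map is surjective: each F^k/F^(k+1) is spanned by the classes of
tree composites with exactly k bracket vertices.\<close>
definition gr_surjective :: "'k::field itself \<Rightarrow> bool" where
  "gr_surjective _ \<longleftrightarrow> (\<forall>k. (Filt k :: (tree \<Rightarrow> 'k) set) \<subseteq> lspan ({ev T | T. nbr T = k} \<union> Filt (Suc k)))"

end

theory Submission
  imports Defs "HOL.Modules"
begin

lemma scl_apply: "scl c f t = c * f t" by (simp add: scl_def)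

declare plus_fun_apply[simp del] minus_apply[simp del] uminus_apply[simp del] zero_fun_apply[simp del]
lemmas fun_app = plus_fun_apply minus_apply uminus_apply zero_fun_apply scl_apply

lemma mult_Leaf[simp]: "mult f g (Leaf n) = 0" by (simp add: mult_def)
lemma mult_Node[simp]: "mult f g (Node a b) = f a * g b" by (simp add: mult_def)

lemma mult_ext: "(\<And>n. F (Leaf n) = G (Leaf n)) \<Longrightarrow> (\<And>a b. F (Node a b) = G (Node a b)) \<Longrightarrow> F = G"
  by (rule ext, case_tac x, auto)

lemma mult_add_left: "mult (f + g) h = mult f h + mult g h"
  by (rule mult_ext) (auto simp: algebra_simps fun_app)
lemma mult_add_right: "mult h (f + g) = mult h f + mult h g"
  by (rule mult_ext) (auto simp: algebra_simps fun_app)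
lemma mult_diff_left: "mult (f - g) h = mult f h - mult g h"
  by (rule mult_ext) (auto simp: algebra_simps fun_app)
lemma mult_diff_right: "mult h (f - g) = mult h f - mult h g"
  by (rule mult_ext) (auto simp: algebra_simps fun_app)
lemma mult_scl_left: "mult (scl c f) h = scl c (mult f h)"
  by (rule mult_ext) (auto simp: algebra_simps fun_app)
lemma mult_scl_right: "mult h (scl c f) = scl c (mult h f)"
  by (rule mult_ext) (auto simp: algebra_simps fun_app)
lemma mult_zero_left: "mult 0 h = 0"
  by (rule mult_ext) (auto simp: fun_app)
lemma mult_zero_right: "mult h 0 = 0"
  by (rule mult_ext) (auto simp: fun_app)

lemmas mult_lin = mult_add_left mult_add_right mult_diff_left mult_diff_right
  mult_scl_left mult_scl_right mult_zero_left mult_zero_right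

interpretation SM: module "scl :: 'k::field \<Rightarrow> (tree \<Rightarrow> 'k) \<Rightarrow> tree \<Rightarrow> 'k"
  by standard (simp_all add: scl_def plus_fun_def algebra_simps)

lemma lspan_eq: "lspan S = SM.span S"
  by (auto simp: lspan_def SM.span_explicit)

definition fs :: "(tree \<Rightarrow> 'k::field) \<Rightarrow> bool" where
  "fs f \<longleftrightarrow> finite {t. f t \<noteq> 0}"

lemma fs_mono: "fs (mono t)"
  by (simp add: fs_def mono_def)

lemma fs_add: "fs f \<Longrightarrow> fs g \<Longrightarrow> fs (f + g)"
  unfolding fs_def
  by (rule finite_subset[of _ "{t. f t \<noteq> 0} \<union> {t. g t \<noteq> 0}"]) (auto simp: fun_app)

lemma fs_diff: "fs f \<Longrightarrow> fs g \<Longrightarrow> fs (f - g)"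
  unfolding fs_def
  by (rule finite_subset[of _ "{t. f t \<noteq> 0} \<union> {t. g t \<noteq> 0}"]) (auto simp: fun_app)

lemma fs_mult: "fs f \<Longrightarrow> fs g \<Longrightarrow> fs (mult f g)"
  unfolding fs_def
proof (rule finite_subset[of _ "(\<lambda>(a,b). Node a b) ` ({t. f t \<noteq> 0} \<times> {t. g t \<noteq> 0})"])
  show "{t. mult f g t \<noteq> 0} \<subseteq> (\<lambda>(a,b). Node a b) ` ({t. f t \<noteq> 0} \<times> {t. g t \<noteq> 0})"
  proof
    fix t assume "t \<in> {t. mult f g t \<noteq> 0}"
    then show "t \<in> (\<lambda>(a,b). Node a b) ` ({t. f t \<noteq> 0} \<times> {t. g t \<noteq> 0})"
      by (cases t) auto
  qed
qed auto

lemma fs_ev: "fs (ev T)"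
proof (induction T)
  case (CVar x) then show ?case by (simp add: fs_mono)
next
  case (CCirc T1 T2) then show ?case by (simp add: circ_def fs_add fs_mult)
next
  case (CBr T1 T2) then show ?case by (simp add: br_def fs_diff fs_mult)
qed

lemma sum_fun_apply: "(sum F A) x = sum (\<lambda>a. F a x) A"
  by (induction A rule: infinite_finite_induct) (auto simp: fun_app)

lemma fs_decomp:
  assumes "fs f"
  shows "f = (\<Sum>t\<in>{t. f t \<noteq> 0}. scl (f t) (mono t))"
proof (rule ext)
  fix s
  have "(\<Sum>t\<in>{t. f t \<noteq> 0}. scl (f t) (mono t)) s = (\<Sum>t\<in>{t. f t \<noteq> 0}. f t * (if s = t then 1 else 0))"
    by (simp add: sum_fun_apply mono_def scl_apply)
  also have "\<dots> = (\<Sum>t\<in>{t. f t \<noteq> 0}. if t = s then f t else 0)"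
    by (rule sum.cong) auto
  also have "\<dots> = f s"
    using assms by (subst sum.delta) (auto simp: fs_def)
  finally show "f s = (\<Sum>t\<in>{t. f t \<noteq> 0}. scl (f t) (mono t)) s" by simp
qed

lemma lin_fs:
  fixes L :: "(tree \<Rightarrow> 'k::field) \<Rightarrow> (tree \<Rightarrow> 'k)"
  assumes V: "SM.subspace V"
    and add: "\<And>x y. L (x + y) = L x + L y"
    and scl: "\<And>c x. L (scl c x) = scl c (L x)"
    and base: "\<And>t. L (mono t) \<in> V"
    and f: "fs f"
  shows "L f \<in> V"
proof -
  have L0: "L 0 = 0"
    using add[of 0 0] by simp
  have "L (\<Sum>t\<in>A. scl (f t) (mono t)) \<in> V" if "finite A" for A
    using that
  proof (induction A rule: finite_induct)
    case empty then show ?case using L0 V by (simp only: sum.empty SM.subspace_0)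
  next
    case (insert x F)
    have "L (\<Sum>t\<in>insert x F. scl (f t) (mono t)) = scl (f x) (L (mono x)) + L (\<Sum>t\<in>F. scl (f t) (mono t))"
      by (subst sum.insert[OF insert.hyps], subst add, subst scl, rule refl)
    then show ?case by (simp only:) (intro SM.subspace_add[OF V] SM.subspace_scale[OF V] base insert.IH)
  qed
  then show ?thesis using f fs_decomp[OF f] by (metis fs_def)
qed


definition Pr :: "(tree \<Rightarrow> 'k::field) \<Rightarrow> (tree \<Rightarrow> 'k) \<Rightarrow> (tree \<Rightarrow> 'k) \<Rightarrow> tree \<Rightarrow> 'k" where
  "Pr f g h = mult (mult f g) h - mult f (mult g h) - (mult (mult f h) g - mult f (mult h g))"

lemma assoc_ident:
  "rel_assoc a b c = scl 2 (Pr a b c) + scl 2 (Pr b a c) + scl 2 (Pr c a b) - (br a (circ b c)) + (circ a (br b c)) + (br a (br b c)) - (br (circ a b) c) + (circ (br a b) c) - (br (br a b) c) + scl 2 (circ (br a c) b)"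
  unfolding rel_assoc_def Pr_def circ_def br_def
  by (simp add: fun_eq_iff fun_app mult_def split: tree.split) (simp add: algebra_simps)


lemma hm_ident:
  "rel_hm a b c d = (br a (br b (circ c d))) - (circ a (br b (br c d))) - (br a (br b (br c d))) - scl 2 (circ a (br (br b d) c)) - scl 2 (br a (br (br b d) c)) - (br (circ a b) (br c d)) - (br (br a b) (circ c d)) - (br (br a b) (br c d)) - (br (circ a c) (br b d)) + (br (br a c) (circ b d)) + scl 2 (br (br a c) (br b d)) - (br (circ a d) (br b c)) + (br (br a d) (circ b c)) + scl 2 (br (br a d) (br b c)) + (br (br (circ a b) c) d) + (circ (br (br a b) c) d) + (br (br (br a b) c) d) - scl 2 (circ (br (br a c) b) d) - scl 2 (br (br (br a c) b) d) - (br (br (circ a b) d) c) + (circ (br (br a b) d) c) - (br (br (br a b) d) c) - scl 2 (circ (br (br a d) b) c) - scl 2 (br (br (br a d) b) c) + (br (br a (circ c d)) b) + (circ (br a (br c d)) b) + (br (br a (br c d)) b) - scl 2 (circ (br (br a c) d) b) + scl 2 (br (br (br a c) d) b) + scl 4 (br (br (br a d) c) b) - scl 4 (Pr (mult a b) c d) + scl 4 (Pr (mult a c) b d) - scl 4 (Pr (mult c a) b d) - scl 4 (Pr (mult d a) b c) - scl 4 (Pr a (mult b d) c) + scl 4 (Pr a (mult d b) c) + scl 4 (Pr a b (mult d c)) - scl 4 (Pr b (mult a c) d) + scl 4 (Pr b (mult c a) d) - scl 4 (Pr b (mult a d) c) + scl 4 (Pr b (mult d a) c) + scl 4 (Pr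 c (mult a b) d) + scl 4 (mult (Pr a c d) b) - scl 4 (mult (Pr c a d) b) - scl 4 (mult (Pr a b d) c)"
  unfolding rel_hm_def Pr_def circ_def br_def
  by (simp add: fun_eq_iff fun_app mult_def split: tree.split) (simp add: algebra_simps)

lemma jacobi_ident:
  "rel_jacobi a b c = Pr a b c - Pr b a c + Pr c a b"
  unfolding rel_jacobi_def Pr_def circ_def br_def
  by (simp add: fun_eq_iff fun_app mult_def split: tree.split) (simp add: algebra_simps)


lemma Pr_add1: "Pr (x + y) g h = Pr x g h + Pr y g h"
  unfolding Pr_def by (simp add: mult_lin algebra_simps)
lemma Pr_add2: "Pr f (x + y) h = Pr f x h + Pr f y h"
  unfolding Pr_def by (simp add: mult_lin algebra_simps)
lemma Pr_add3: "Pr f g (x + y) = Pr f g x + Pr f g y"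
  unfolding Pr_def by (simp add: mult_lin algebra_simps)
lemma Pr_scl1: "Pr (scl c x) g h = scl c (Pr x g h)"
  unfolding Pr_def by (simp add: mult_lin SM.scale_right_diff_distrib)
lemma Pr_scl2: "Pr f (scl c x) h = scl c (Pr f x h)"
  unfolding Pr_def by (simp add: mult_lin SM.scale_right_diff_distrib)
lemma Pr_scl3: "Pr f g (scl c x) = scl c (Pr f g x)"
  unfolding Pr_def by (simp add: mult_lin SM.scale_right_diff_distrib)

lemma I_left_mono:
  assumes "p \<in> SM.span PLI" shows "mult (mono t) p \<in> SM.span PLI"
  using assms
proof (induction rule: SM.span_induct_alt)
  case base then show ?case by (simp add: mult_lin SM.span_zero)
next
  case (step c x y)
  then show ?case
    by (simp add: mult_lin) (rule SM.span_add[OF SM.span_scale[OF SM.span_base[OF PLI.left[OF step.hyps]]] step.IH])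
qed

lemma I_right_mono:
  assumes "p \<in> SM.span PLI" shows "mult p (mono t) \<in> SM.span PLI"
  using assms
proof (induction rule: SM.span_induct_alt)
  case base then show ?case by (simp add: mult_lin SM.span_zero)
next
  case (step c x y)
  then show ?case
    by (simp add: mult_lin) (rule SM.span_add[OF SM.span_scale[OF SM.span_base[OF PLI.right[OF step.hyps]]] step.IH])
qed

lemma I_left: "fs g \<Longrightarrow> p \<in> SM.span PLI \<Longrightarrow> mult g p \<in> SM.span PLI"
  by (rule lin_fs[where L="\<lambda>g. mult g p"]) (simp_all add: mult_lin I_left_mono)

lemma I_right: "fs g \<Longrightarrow> p \<in> SM.span PLI \<Longrightarrow> mult p g \<in> SM.span PLI"
  by (rule lin_fs[where L="\<lambda>g. mult p g"]) (simp_all add: mult_lin I_right_mono)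

lemma Pr_in_I:
  assumes f: "fs f" and g: "fs g" and h: "fs h"
  shows "Pr f g h \<in> SM.span PLI"
proof -
  have 1: "Pr f (mono u) (mono v) \<in> SM.span PLI" for u v
    by (rule lin_fs[where L="\<lambda>f. Pr f (mono u) (mono v)", OF _ _ _ _ f])
      (simp_all add: Pr_add1 Pr_scl1 SM.span_base PLI.gen[unfolded Pr_def[symmetric]])
  have 2: "Pr f g (mono v) \<in> SM.span PLI" for v
    by (rule lin_fs[where L="\<lambda>g. Pr f g (mono v)", OF _ _ _ _ g])
      (simp_all add: Pr_add2 Pr_scl2 1)
  show ?thesis
    by (rule lin_fs[where L="\<lambda>h. Pr f g h", OF _ _ _ _ h])
      (simp_all add: Pr_add3 Pr_scl3 2)
qed

lemma Filt_eq: "Filt k = SM.span (PLI \<union> {ev T | T. k \<le> nbr T})"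
  by (simp add: Filt_def lspan_eq)

lemma Filt_I: "p \<in> SM.span PLI \<Longrightarrow> p \<in> Filt k"
  unfolding Filt_eq using SM.span_mono[of PLI "PLI \<union> {ev T | T. k \<le> nbr T}"] by blast

lemma Filt_ev: "k \<le> nbr T \<Longrightarrow> ev T \<in> Filt k"
  unfolding Filt_eq by (rule SM.span_base) blast

lemma Filt_add: "x \<in> Filt k \<Longrightarrow> y \<in> Filt k \<Longrightarrow> x + y \<in> Filt k"
  unfolding Filt_eq by (rule SM.span_add)
lemma Filt_diff: "x \<in> Filt k \<Longrightarrow> y \<in> Filt k \<Longrightarrow> x - y \<in> Filt k"
  unfolding Filt_eq by (rule SM.span_diff)
lemma Filt_neg: "x \<in> Filt k \<Longrightarrow> - x \<in> Filt k"
  unfolding Filt_eq by (rule SM.span_neg)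
lemma Filt_scl: "x \<in> Filt k \<Longrightarrow> scl c x \<in> Filt k"
  unfolding Filt_eq by (rule SM.span_scale)
lemma Filt_zero: "0 \<in> Filt k"
  unfolding Filt_eq by (rule SM.span_zero)

lemma Filt_Pr: "fs f \<Longrightarrow> fs g \<Longrightarrow> fs h \<Longrightarrow> Pr f g h \<in> Filt k"
  by (intro Filt_I Pr_in_I)
lemma Filt_mult_Pr_l: "fs e \<Longrightarrow> fs f \<Longrightarrow> fs g \<Longrightarrow> fs h \<Longrightarrow> mult e (Pr f g h) \<in> Filt k"
  by (intro Filt_I Pr_in_I I_left)
lemma Filt_mult_Pr_r: "fs e \<Longrightarrow> fs f \<Longrightarrow> fs g \<Longrightarrow> fs h \<Longrightarrow> mult (Pr f g h) e \<in> Filt k"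
  by (intro Filt_I Pr_in_I I_right)

lemma circ_lin_l: "circ (scl c v + y) e = scl c (circ v e) + circ y e"
  unfolding circ_def by (simp add: mult_lin SM.scale_right_distrib algebra_simps)
lemma circ_lin_r: "circ e (scl c v + y) = scl c (circ e v) + circ e y"
  unfolding circ_def by (simp add: mult_lin SM.scale_right_distrib algebra_simps)
lemma br_lin_l: "br (scl c v + y) e = scl c (br v e) + br y e"
  unfolding br_def by (simp add: mult_lin SM.scale_right_distrib SM.scale_right_diff_distrib algebra_simps)
lemma br_lin_r: "br e (scl c v + y) = scl c (br e v) + br e y"
  unfolding br_def by (simp add: mult_lin SM.scale_right_distrib SM.scale_right_diff_distrib algebra_simps)
lemma circ_zero: "circ 0 e = 0" "circ e 0 = 0"
  unfolding circ_def by (simp_all add: mult_lin)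
lemma br_zero: "br 0 e = 0" "br e 0 = 0"
  unfolding br_def by (simp_all add: mult_lin)

lemma I_circ: "v \<in> SM.span PLI \<Longrightarrow> fs e \<Longrightarrow> circ v e \<in> SM.span PLI \<and> circ e v \<in> SM.span PLI"
  unfolding circ_def by (intro conjI SM.span_add I_left I_right)
lemma I_br: "v \<in> SM.span PLI \<Longrightarrow> fs e \<Longrightarrow> br v e \<in> SM.span PLI \<and> br e v \<in> SM.span PLI"
  unfolding br_def by (intro conjI SM.span_diff I_left I_right)

lemma Filt_ops:
  assumes "x \<in> Filt k"
  shows "circ x (ev T) \<in> Filt (k + nbr T) \<and> circ (ev T) x \<in> Filt (k + nbr T)
       \<and> br x (ev T) \<in> Filt (Suc (k + nbr T)) \<and> br (ev T) x \<in> Filt (Suc (k + nbr T))"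
  using assms unfolding Filt_eq[of k]
proof (induction rule: SM.span_induct_alt)
  case base then show ?case by (simp add: circ_zero br_zero Filt_zero)
next
  case (step c v y)
  have "circ v (ev T) \<in> Filt (k + nbr T) \<and> circ (ev T) v \<in> Filt (k + nbr T)
       \<and> br v (ev T) \<in> Filt (Suc (k + nbr T)) \<and> br (ev T) v \<in> Filt (Suc (k + nbr T))"
    using step(1)
  proof
    assume "v \<in> PLI"
    then have "v \<in> SM.span PLI" by (rule SM.span_base)
    then show ?thesis using I_circ I_br fs_ev Filt_I by metis
  next
    assume "v \<in> {ev T | T. k \<le> nbr T}"
    then obtain S where S: "v = ev S" "k \<le> nbr S" by blast
    have "circ v (ev T) = ev (CCirc S T)" "circ (ev T) v = ev (CCirc T S)"
         "br v (ev T) = ev (CBr S T)" "br (ev T) v = ev (CBr T S)" using S by simp_all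
    then show ?thesis using S by (simp only:) (intro conjI Filt_ev; simp)
  qed
  then show ?case using step(2)
    by (simp add: circ_lin_l circ_lin_r br_lin_l br_lin_r Filt_add Filt_scl)
qed

lemma FMI_Filt: "(w, x) \<in> FMI \<Longrightarrow> x \<in> Filt (Suc w)"
proof (induction rule: FMI.induct)
  case (csym A B) then show ?case by (simp add: rel_csym_def circ_def add.commute Filt_zero)
next
  case (bskew A B) then show ?case by (simp add: rel_bskew_def br_def Filt_zero)
next
  case (assoc A B C)
  show ?case
    apply (simp only: assoc_ident ev.simps[symmetric])
    apply (intro Filt_add Filt_diff Filt_scl Filt_neg Filt_ev Filt_Pr Filt_mult_Pr_l Filt_mult_Pr_r fs_ev fs_mult)
    apply simp_all
    done
next
  case (jacobi A B C)
  show ?case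
    apply (simp only: jacobi_ident ev.simps[symmetric])
    apply (intro Filt_add Filt_diff Filt_scl Filt_neg Filt_ev Filt_Pr Filt_mult_Pr_l Filt_mult_Pr_r fs_ev fs_mult)
    done
next
  case (hm A B C D)
  show ?case
    apply (simp only: hm_ident ev.simps[symmetric])
    apply (intro Filt_add Filt_diff Filt_scl Filt_neg Filt_ev Filt_Pr Filt_mult_Pr_l Filt_mult_Pr_r fs_ev fs_mult)
    apply simp_all
    done
next
  case (circ_l w x T) then show ?case using Filt_ops[of x "Suc w" T] by simp
next
  case (circ_r w x T) then show ?case using Filt_ops[of x "Suc w" T] by simp
next
  case (br_l w x T) then show ?case using Filt_ops[of x "Suc w" T] by simp
next
  case (br_r w x T) then show ?case using Filt_ops[of x "Suc w" T] by simp
qed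

theorem lemma4:
  shows "descends_to_FMan TYPE('k::field_char_0) \<and> gr_surjective TYPE('k::field_char_0)"
proof
  show "descends_to_FMan TYPE('k::field_char_0)"
    unfolding descends_to_FMan_def using FMI_Filt by blast
  show "gr_surjective TYPE('k::field_char_0)"
    unfolding gr_surjective_def
  proof
    fix k
    let ?G = "{ev T | T. nbr T = k} \<union> (Filt (Suc k) :: (tree \<Rightarrow> 'k) set)"
    have sub: "PLI \<union> {ev T | T. k \<le> nbr T} \<subseteq> SM.span ?G"
    proof
      fix v :: "tree \<Rightarrow> 'k" assume "v \<in> PLI \<union> {ev T | T. k \<le> nbr T}"
      then show "v \<in> SM.span ?G"
      proof
        assume "v \<in> PLI"
        then have "v \<in> Filt (Suc k)" by (intro Filt_I SM.span_base)
        then show ?thesis by (intro SM.span_base) blast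
      next
        assume "v \<in> {ev T | T. k \<le> nbr T}"
        then obtain T where T: "v = ev T" "k \<le> nbr T" by blast
        show ?thesis
        proof (cases "nbr T = k")
          case True then show ?thesis using T by (intro SM.span_base) blast
        next
          case False then have "v \<in> Filt (Suc k)" using T by (simp add: Filt_ev)
          then show ?thesis by (intro SM.span_base) blast
        qed
      qed
    qed
    show "Filt k \<subseteq> lspan ?G"
      unfolding lspan_eq Filt_eq[of k] by (rule SM.span_minimal[OF sub SM.subspace_span])
  qed
qed

end
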